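(* Let $\mathbb{F}$ be an algebraically closed field and let $A,A^*$ be a pair of $2\times2$ matrices over $\mathbb{F}$, each tridiagonal with both diagonal entries $0$ and nonzero off-diagonal entries, which is a Leonard pair in $\mathrm{Mat}_2(\mathbb{F})$. Then there exist nonzero $\xi,\xi^*\in\mathbb{F}$, a nonzero $s\in\mathbb{F}$ with $s^2\neq1$, and an invertible diagonal matrix $D\in\mathrm{Mat}_2(\mathbb{F})$ such that $D^{-1}(\xi A)D=\begin{pmatrix}0&1\\1&0\end{pmatrix}$ and $D^{-1}(\xi^*A^* )D=\begin{pmatrix}0&s^{-1}\\ s&0\end{pmatrix}$.
   Context: A Leonard pair in $\mathrm{Mat}_{d+1}(\mathbb{F})$ is a pair of matrices $A,A^*$ such that there is a basis of $\mathbb{F}^{d+1}$ in which $A$ is irreducible tridiagonal (tridiagonal with all sub/superdiagonal entries nonzero) and $A^*$ is diagonal, and a basis in which $A^*$ is irreducible tridiagonal and $A$ is diagonal. (In the paper's terminology, the conclusion says that after replacing $A,A^*$ by nonzero scalar multiples, the pair is equivalent, via conjugation by an invertible diagonal matrix, to the Leonard pair $\begin{pmatrix}0&1\\1&0\end{pmatrix},\begin{pmatrix}0&s^{-1}\\ s&0\end{pmatrix}$ with $s\ne0$, $s^2\ne1$.) *)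

theory Defs
  imports "HOL-Computational_Algebra.Polynomial" "Jordan_Normal_Form.Matrix"
begin

definition irred_tridiagonal :: "'a::zero mat \<Rightarrow> bool" where
  "irred_tridiagonal B \<longleftrightarrow> square_mat B \<and>
     (\<forall>i<dim_row B. \<forall>j<dim_col B. Suc i < j \<or> Suc j < i \<longrightarrow> B $$ (i,j) = 0) \<and>
     (\<forall>i. Suc i < dim_row B \<longrightarrow> B $$ (i, Suc i) \<noteq> 0 \<and> B $$ (Suc i, i) \<noteq> 0)"

text \<open>Leonard pair in Mat_n(F) (n = d+1): there is a basis of F^n (the columns of an
  invertible P) in which A is irreducible tridiagonal and A* is diagonal, and a
  basis (columns of Q) in which A* is irreducible tridiagonal and A is diagonal.\<close>
definition leonard_pair :: "nat \<Rightarrow> 'a::field mat \<Rightarrow> 'a mat \<Rightarrow> bool" where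
  "leonard_pair n A As \<longleftrightarrow> n \<ge> 1 \<and> A \<in> carrier_mat n n \<and> As \<in> carrier_mat n n \<and>
     (\<exists>P Pi. P \<in> carrier_mat n n \<and> Pi \<in> carrier_mat n n \<and> inverts_mat P Pi \<and> inverts_mat Pi P \<and>
        irred_tridiagonal (Pi * A * P) \<and> diagonal_mat (Pi * As * P)) \<and>
     (\<exists>Q Qi. Q \<in> carrier_mat n n \<and> Qi \<in> carrier_mat n n \<and> inverts_mat Q Qi \<and> inverts_mat Qi Q \<and>
        irred_tridiagonal (Qi * As * Q) \<and> diagonal_mat (Qi * A * Q))"

end

theory Submission
  imports Defs
begin

lemma sum2: "(\<Sum>i\<in>{0..<2::nat}. f i) = f 0 + f 1"
  by (simp add: numeral_2_eq_2)

lemma less2: "(i::nat) < 2 \<longleftrightarrow> i = 0 \<or> i = 1" by auto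

lemma sqrt_ex: "\<exists>y::'a::alg_closed_field. y ^ 2 = x"
  by (rule nth_root_exists) simp

lemma conj2:
  fixes M :: "'a::field mat"
  assumes M: "M \<in> carrier_mat 2 2" and "M $$ (0,0) = 0" "M $$ (1,1) = 0" and t: "t \<noteq> 0"
  shows "mat 2 2 (\<lambda>(i,j). if i = j then (if i = 0 then 1 else inverse t) else 0) * (k \<cdot>\<^sub>m M) *
         mat 2 2 (\<lambda>(i,j). if i = j then (if i = 0 then 1 else t) else 0)
       = mat_of_rows_list 2 [[0, k * M $$ (0,1) * t], [k * M $$ (1,0) / t, 0]]"
proof (rule eq_matI)
  fix i j assume "i < dim_row (mat_of_rows_list 2 [[0, k * M $$ (0,1) * t], [k * M $$ (1,0) / t, 0]] :: 'a mat)"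
    "j < dim_col (mat_of_rows_list 2 [[0, k * M $$ (0,1) * t], [k * M $$ (1,0) / t, 0]] :: 'a mat)"
  then have "i = 0 \<or> i = 1" "j = 0 \<or> j = 1" by (auto simp: mat_of_rows_list_def)
  then show "(mat 2 2 (\<lambda>(i,j). if i = j then (if i = 0 then 1 else inverse t) else 0) * (k \<cdot>\<^sub>m M) *
         mat 2 2 (\<lambda>(i,j). if i = j then (if i = 0 then 1 else t) else 0)) $$ (i,j)
       = mat_of_rows_list 2 [[0, k * M $$ (0,1) * t], [k * M $$ (1,0) / t, 0]] $$ (i,j)"
    using M assms(2,3) t
    by (auto simp: scalar_prod_def sum2 mat_of_rows_list_def field_simps row_def col_def)
qed (use M in \<open>auto simp: mat_of_rows_list_def\<close>)

theorem proposition4p3: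
  fixes A As :: "'a::alg_closed_field mat"
  assumes "A \<in> carrier_mat 2 2" and "As \<in> carrier_mat 2 2"
    and "A $$ (0,0) = 0" and "A $$ (1,1) = 0" and "A $$ (0,1) \<noteq> 0" and "A $$ (1,0) \<noteq> 0"
    and "As $$ (0,0) = 0" and "As $$ (1,1) = 0" and "As $$ (0,1) \<noteq> 0" and "As $$ (1,0) \<noteq> 0"
    and "leonard_pair 2 A As"
  shows "\<exists>\<xi> \<xi>s s D Di. \<xi> \<noteq> 0 \<and> \<xi>s \<noteq> 0 \<and> s \<noteq> 0 \<and> s ^ 2 \<noteq> 1 \<and>
           D \<in> carrier_mat 2 2 \<and> Di \<in> carrier_mat 2 2 \<and> diagonal_mat D \<and>
           inverts_mat D Di \<and> inverts_mat Di D \<and>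
           Di * (\<xi> \<cdot>\<^sub>m A) * D = mat_of_rows_list 2 [[0, 1], [1, 0]] \<and>
           Di * (\<xi>s \<cdot>\<^sub>m As) * D = mat_of_rows_list 2 [[0, inverse s], [s, 0]]"
proof -
  define a where "a = A $$ (0,1)"
  define b where "b = A $$ (1,0)"
  define c where "c = As $$ (0,1)"
  define d where "d = As $$ (1,0)"
  have a: "a \<noteq> 0" and b: "b \<noteq> 0" and c: "c \<noteq> 0" and d: "d \<noteq> 0"
    using assms by (auto simp: a_def b_def c_def d_def)
  have Aent: "\<And>i j. i < 2 \<Longrightarrow> j < 2 \<Longrightarrow> A $$ (i,j) = (if i = 0 then (if j = 0 then 0 else a) else (if j = 0 then b else 0))"
    using assms(3,4) by (auto simp: less2 a_def b_def)
  have Asent: "\<And>i j. i < 2 \<Longrightarrow> j < 2 \<Longrightarrow> As $$ (i,j) = (if i = 0 then (if j = 0 then 0 else c) else (if j = 0 then d else 0))"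
    using assms(7,8) by (auto simp: less2 c_def d_def)
  have ad: "a * d \<noteq> b * c"
  proof
    assume h: "a * d = b * c"
    have eq: "As = (c / a) \<cdot>\<^sub>m A"
    proof (rule eq_matI)
      fix i j assume "i < dim_row ((c / a) \<cdot>\<^sub>m A)" "j < dim_col ((c / a) \<cdot>\<^sub>m A)"
      then have ij: "i < 2" "j < 2" using assms(1) by auto
      show "As $$ (i, j) = ((c / a) \<cdot>\<^sub>m A) $$ (i, j)"
        using ij assms(1) Aent Asent a h
        by (auto simp: less2 field_simps)
    qed (use assms(1,2) in auto)
    from assms(11) obtain Q Qi where Q: "Q \<in> carrier_mat 2 2" "Qi \<in> carrier_mat 2 2"
      "irred_tridiagonal (Qi * As * Q)" "diagonal_mat (Qi * A * Q)"
      unfolding leonard_pair_def by blast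
    have "Qi * As * Q = (c / a) \<cdot>\<^sub>m (Qi * A * Q)"
      using Q assms(1) unfolding eq
      by (metis mult_smult_assoc_mat mult_smult_distrib mult_carrier_mat)
    moreover have "(Qi * A * Q) $$ (0, 1) = 0"
      using Q(4) Q(1,2) assms(1) unfolding diagonal_mat_def by auto
    moreover have "(Qi * As * Q) $$ (0, Suc 0) \<noteq> 0"
      using Q(3) Q(1,2) assms(2) unfolding irred_tridiagonal_def by auto
    ultimately show False using Q(1,2) assms(1) by auto
  qed
  obtain r where r: "r ^ 2 = inverse (a * b)" using sqrt_ex by blast
  obtain q where q: "q ^ 2 = inverse (c * d)" using sqrt_ex by blast
  have r0: "r \<noteq> 0" using r a b by auto
  have q0: "q \<noteq> 0" using q c d by auto
  define t where "t = r * b"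
  have t0: "t \<noteq> 0" using r0 b by (simp add: t_def)
  define s where "s = q * d / t"
  have s0: "s \<noteq> 0" using q0 d t0 by (simp add: s_def)
  define D :: "'a mat" where "D = mat 2 2 (\<lambda>(i,j). if i = j then (if i = 0 then 1 else t) else 0)"
  define Di :: "'a mat" where "Di = mat 2 2 (\<lambda>(i,j). if i = j then (if i = 0 then 1 else inverse t) else 0)"
  have rr: "r * r * a * b = 1" using r a b by (simp add: power2_eq_square field_simps)
  have qq: "q * q * c * d = 1" using q c d by (simp add: power2_eq_square field_simps)
  have "s ^ 2 \<noteq> 1"
  proof
    assume "s ^ 2 = 1"
    then have "q * q * d * d = t * t" using t0 by (simp add: s_def power2_eq_square field_simps)
    then have "q * q * d * d * c * a = r * r * b * b * c * a" by (simp add: t_def algebra_simps)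
    then have "(q * q * c * d) * d * a = (r * r * a * b) * b * c" by (simp add: algebra_simps)
    then have "1 * d * a = 1 * b * c" using rr qq by simp
    then show False using ad by (simp add: algebra_simps)
  qed
  moreover have "Di * (r \<cdot>\<^sub>m A) * D = mat_of_rows_list 2 [[0, 1], [1, 0]]"
    unfolding D_def Di_def conj2[OF assms(1,3,4) t0]
  proof -
    have "r * A $$ (0,1) * t = 1" "r * A $$ (1,0) / t = 1"
      using rr t0 b r0 unfolding a_def[symmetric] b_def[symmetric] t_def by (auto simp: field_simps)
    then show "mat_of_rows_list 2 [[0, r * A $$ (0, 1) * t], [r * A $$ (1, 0) / t, 0]] = mat_of_rows_list 2 [[0, 1], [1, 0]]"
      by simp
  qed
  moreover have "Di * (q \<cdot>\<^sub>m As) * D = mat_of_rows_list 2 [[0, inverse s], [s, 0]]"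
    unfolding D_def Di_def conj2[OF assms(2,7,8) t0]
  proof -
    have "q * As $$ (0,1) * t = inverse s" "q * As $$ (1,0) / t = s"
      using qq t0 q0 d c unfolding c_def[symmetric] d_def[symmetric] s_def by (auto simp: field_simps)
    then show "mat_of_rows_list 2 [[0, q * As $$ (0, 1) * t], [q * As $$ (1, 0) / t, 0]] = mat_of_rows_list 2 [[0, inverse s], [s, 0]]"
      by simp
  qed
  moreover have "inverts_mat D Di" "inverts_mat Di D"
    unfolding inverts_mat_def
    by (rule eq_matI; use t0 in \<open>auto simp: D_def Di_def less2 scalar_prod_def sum2\<close>)+
  moreover have "diagonal_mat D" by (auto simp: diagonal_mat_def D_def)
  ultimately show ?thesis using r0 q0 s0
    by (intro exI[of _ r] exI[of _ q] exI[of _ s] exI[of _ D] exI[of _ Di]) (auto simp: D_def Di_def)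
qed

end
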